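(* Let $d\ge1$. Then $\mathcal U(H(d,2))$ is isomorphic to the one-object groupoid $\{\ast\}/\!/(\mathbb Z/2\mathbb Z)$ (one object $\ast$, two morphisms $0=\mathrm{id}_\ast$ and $1$), and under this identification $\varpi(H(d,2))=(\bar\lambda,s_1)$ is given by $\bar\lambda(x)=\ast$ for objects $x$, $\bar\lambda((g,x))=\sum_{i=1}^d g_i\in\mathbb Z/2\mathbb Z$ for morphisms $(g,x)$, and $s_1(a)=a\bmod 2$ for $a\in\{0,1,\dots,d\}$. Consequently, for every category $\mathcal C$ every morphism-colored functor from $H(d,2)$ to $(\mathcal C,\mathrm{id})$ factors uniquely through this morphism-colored functor to $(\{\ast\}/\!/(\mathbb Z/2\mathbb Z),\mathrm{id})$, and for all positive integers $d,d'$ there is a one-to-one correspondence between morphism-colored functors $H(d,2)\to(\mathcal C,\mathrm{id})$ and morphism-colored functors $H(d',2)\to(\mathcal C,\mathrm{id})$.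
   Context: A morphism-colored category is a pair $(\mathcal C,\lambda)$ where $\mathcal C$ is a category and $\lambda$ assigns to each morphism $f$ a color $\lambda(f)$, such that whenever $\lambda(g)=\lambda(f_1\circ f_2)$ there exist composable $g_1,g_2$ with $g=g_1\circ g_2$, $\lambda(g_i)=\lambda(f_i)$. $(\mathcal C,\mathrm{id})$ (each morphism colored by itself) is the discrete morphism-colored category. A morphism-colored functor $(F,\gamma):(\mathcal C,\lambda)\to(\mathcal C',\lambda')$ is a functor $F$ with a map $\gamma$ on colors such that $\gamma(\lambda(f))=\lambda'(F(f))$ for all morphisms $f$; composition is componentwise. For a small morphism-colored groupoid $(\mathcal G,\lambda)$ with $\lambda(f)=\lambda(g)\Rightarrow\lambda(f^{-1})=\lambda(g^{-1})$: $I_1=\lambda(\mathrm{Mor}\,\mathcal G)$, $\lambda_1$ the corestriction; $I_0=\{\lambda(\mathrm{id}_x)\}$, $\lambda_0(x)=\lambda(\mathrm{id}_x)$; $\overset{1}{\sim}$ on $I_1$ relates $\lambda(f_1\circ\cdots\circ f_l)$ and $\lambda(g_1\circ\cdots\circ g_l)$ for composable sequences with $\lambda(f_i)=\lambda(g_i)$ for all $i$ (an equivalence relation), with quotient $s_1:I_1\to\bar I_1$; $\overset{0}{\sim}$ on $I_0$ relates $\lambda_0(\mathrm{source} f)$, $\lambda_0(\mathrm{source} g)$ whenever $s_1\lambda_1(f)=s_1\lambda_1(g)$, with quotient $s_0:I_0\to\bar I_0$. $\mathcal U(\mathcal G,\lambda)$ is the groupoid with objects $\bar I_0$, morphisms $\bar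 I_1$, source/target of $s_1\lambda_1(f)$ being $s_0\lambda_0$ of source/target of $f$, composition $s_1\lambda_1(f)\circ s_1\lambda_1(g)=s_1\lambda_1(f\circ g)$; $\bar\lambda:\mathcal G\to\mathcal U(\mathcal G,\lambda)$ is $x\mapsto s_0\lambda_0(x)$, $f\mapsto s_1\lambda_1(f)$, and $\varpi(\mathcal G,\lambda)=(\bar\lambda,s_1)$. Hamming schemoid: let $G=(\mathbb Z/n\mathbb Z)^d$ and $w(x)=\#\{i:x_i\neq0\}$ the Hamming weight. $G/\!/G$ is the action groupoid: objects $G$, morphisms $G\times G$, where $(g,x)$ has source $x$ and target $g+x$, composition $(h,g+x)\circ(g,x)=(h+g,x)$, identity $(0,x)$, inverse $(g,x)^{-1}=(-g,g+x)$. Let $\pi(g,x)=g$. Then $H(d,n)=(G/\!/G,\,w\circ\pi)$, with colors in $\{0,\dots,d\}$. *)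

theory Defs
  imports "HOL-Library.FuncSet"
begin

record ('o,'m) cat =
  Obj :: "'o set"
  Mor :: "'m set"
  Dom :: "'m \<Rightarrow> 'o"
  Cod :: "'m \<Rightarrow> 'o"
  Comp :: "'m \<Rightarrow> 'm \<Rightarrow> 'm"   (* Comp C g f = g \<circ> f, defined when Dom g = Cod f *)
  Ide :: "'o \<Rightarrow> 'm"

definition category :: "('o,'m) cat \<Rightarrow> bool" where
  "category C \<longleftrightarrow>
     (\<forall>f\<in>Mor C. Dom C f \<in> Obj C \<and> Cod C f \<in> Obj C) \<and>
     (\<forall>x\<in>Obj C. Ide C x \<in> Mor C \<and> Dom C (Ide C x) = x \<and> Cod C (Ide C x) = x) \<and>
     (\<forall>g\<in>Mor C. \<forall>f\<in>Mor C. Dom C g = Cod C f \<longrightarrow>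
         Comp C g f \<in> Mor C \<and> Dom C (Comp C g f) = Dom C f \<and> Cod C (Comp C g f) = Cod C g) \<and>
     (\<forall>f\<in>Mor C. Comp C (Ide C (Cod C f)) f = f \<and> Comp C f (Ide C (Dom C f)) = f) \<and>
     (\<forall>h\<in>Mor C. \<forall>g\<in>Mor C. \<forall>f\<in>Mor C. Dom C h = Cod C g \<longrightarrow> Dom C g = Cod C f \<longrightarrow>
         Comp C h (Comp C g f) = Comp C (Comp C h g) f)"

definition is_functor :: "('o,'m) cat \<Rightarrow> ('p,'n) cat \<Rightarrow> ('o \<Rightarrow> 'p) \<Rightarrow> ('m \<Rightarrow> 'n) \<Rightarrow> bool" where
  "is_functor C D Fo Fm \<longleftrightarrow>
     (\<forall>x\<in>Obj C. Fo x \<in> Obj D) \<and>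
     (\<forall>f\<in>Mor C. Fm f \<in> Mor D \<and> Dom D (Fm f) = Fo (Dom C f) \<and> Cod D (Fm f) = Fo (Cod C f)) \<and>
     (\<forall>g\<in>Mor C. \<forall>f\<in>Mor C. Dom C g = Cod C f \<longrightarrow> Fm (Comp C g f) = Comp D (Fm g) (Fm f)) \<and>
     (\<forall>x\<in>Obj C. Fm (Ide C x) = Ide D (Fo x))"

definition cat_iso :: "('o,'m) cat \<Rightarrow> ('p,'n) cat \<Rightarrow> ('o \<Rightarrow> 'p) \<Rightarrow> ('m \<Rightarrow> 'n) \<Rightarrow> bool" where
  "cat_iso C D Fo Fm \<longleftrightarrow> is_functor C D Fo Fm \<and> bij_betw Fo (Obj C) (Obj D) \<and> bij_betw Fm (Mor C) (Mor D)"

definition mc_cat :: "('o,'m) cat \<Rightarrow> ('m \<Rightarrow> 'c) \<Rightarrow> bool" where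
  "mc_cat C lam \<longleftrightarrow> category C \<and>
     (\<forall>f1\<in>Mor C. \<forall>f2\<in>Mor C. \<forall>g\<in>Mor C. Dom C f1 = Cod C f2 \<longrightarrow> lam g = lam (Comp C f1 f2) \<longrightarrow>
        (\<exists>g1\<in>Mor C. \<exists>g2\<in>Mor C. Dom C g1 = Cod C g2 \<and> g = Comp C g1 g2 \<and>
            lam g1 = lam f1 \<and> lam g2 = lam f2))"

text \<open>A morphism-colored functor (F, gamma); the components are represented as extensional
  functions on the respective carriers (objects, morphisms, colors = lam ` Mor C), so that
  equality of morphism-colored functors is equality of the triples.\<close>
definition mc_functor ::
  "('o,'m) cat \<Rightarrow> ('m \<Rightarrow> 'c) \<Rightarrow> ('p,'n) cat \<Rightarrow> ('n \<Rightarrow> 'e) \<Rightarrow>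
   ('o \<Rightarrow> 'p) \<Rightarrow> ('m \<Rightarrow> 'n) \<Rightarrow> ('c \<Rightarrow> 'e) \<Rightarrow> bool" where
  "mc_functor C lam D mu Fo Fm gam \<longleftrightarrow>
     is_functor C D Fo Fm \<and>
     Fo \<in> extensional (Obj C) \<and> Fm \<in> extensional (Mor C) \<and> gam \<in> extensional (lam ` Mor C) \<and>
     (\<forall>f\<in>Mor C. gam (lam f) = mu (Fm f))"

definition mc_functors ::
  "('o,'m) cat \<Rightarrow> ('m \<Rightarrow> 'c) \<Rightarrow> ('p,'n) cat \<Rightarrow> ('n \<Rightarrow> 'e) \<Rightarrow>
   (('o \<Rightarrow> 'p) \<times> ('m \<Rightarrow> 'n) \<times> ('c \<Rightarrow> 'e)) set" where
  "mc_functors C lam D mu = {(Fo, Fm, gam). mc_functor C lam D mu Fo Fm gam}"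

definition mc_comp ::
  "('o,'m) cat \<Rightarrow> ('m \<Rightarrow> 'c) \<Rightarrow>
   (('p \<Rightarrow> 'q) \<times> ('n \<Rightarrow> 'k) \<times> ('e \<Rightarrow> 'h)) \<Rightarrow>
   (('o \<Rightarrow> 'p) \<times> ('m \<Rightarrow> 'n) \<times> ('c \<Rightarrow> 'e)) \<Rightarrow>
   (('o \<Rightarrow> 'q) \<times> ('m \<Rightarrow> 'k) \<times> ('c \<Rightarrow> 'h))" where
  "mc_comp C lam G F =
     (compose (Obj C) (fst G) (fst F),
      compose (Mor C) (fst (snd G)) (fst (snd F)),
      compose (lam ` Mor C) (snd (snd G)) (snd (snd F)))"

definition chain :: "('o,'m) cat \<Rightarrow> 'm list \<Rightarrow> bool" where
  "chain G fs \<longleftrightarrow> fs \<noteq> [] \<and> set fs \<subseteq> Mor G \<and>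
     (\<forall>i. Suc i < length fs \<longrightarrow> Dom G (fs ! i) = Cod G (fs ! Suc i))"

fun comp_list :: "('o,'m) cat \<Rightarrow> 'm list \<Rightarrow> 'm" where
  "comp_list G [] = undefined"
| "comp_list G [f] = f"
| "comp_list G (f # fs) = Comp G f (comp_list G fs)"

definition I1 :: "('o,'m) cat \<Rightarrow> ('m \<Rightarrow> 'c) \<Rightarrow> 'c set" where
  "I1 G lam = lam ` Mor G"

definition rel1 :: "('o,'m) cat \<Rightarrow> ('m \<Rightarrow> 'c) \<Rightarrow> 'c \<Rightarrow> 'c \<Rightarrow> bool" where
  "rel1 G lam a b \<longleftrightarrow>
     (\<exists>fs gs. chain G fs \<and> chain G gs \<and> map lam fs = map lam gs \<and>
        a = lam (comp_list G fs) \<and> b = lam (comp_list G gs))"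

definition s1 :: "('o,'m) cat \<Rightarrow> ('m \<Rightarrow> 'c) \<Rightarrow> 'c \<Rightarrow> 'c set" where
  "s1 G lam a = {b \<in> I1 G lam. rel1 G lam a b}"

definition I0 :: "('o,'m) cat \<Rightarrow> ('m \<Rightarrow> 'c) \<Rightarrow> 'c set" where
  "I0 G lam = (\<lambda>x. lam (Ide G x)) ` Obj G"

definition lam0 :: "('o,'m) cat \<Rightarrow> ('m \<Rightarrow> 'c) \<Rightarrow> 'o \<Rightarrow> 'c" where
  "lam0 G lam x = lam (Ide G x)"

definition rel0_base :: "('o,'m) cat \<Rightarrow> ('m \<Rightarrow> 'c) \<Rightarrow> 'c \<Rightarrow> 'c \<Rightarrow> bool" where
  "rel0_base G lam a b \<longleftrightarrow>
     (\<exists>f\<in>Mor G. \<exists>g\<in>Mor G. s1 G lam (lam f) = s1 G lam (lam g) \<and>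
        a = lam0 G lam (Dom G f) \<and> b = lam0 G lam (Dom G g))"

definition s0 :: "('o,'m) cat \<Rightarrow> ('m \<Rightarrow> 'c) \<Rightarrow> 'c \<Rightarrow> 'c set" where
  "s0 G lam a = {b \<in> I0 G lam. (rel0_base G lam)\<^sup>*\<^sup>* a b}"

definition Ucat :: "('o,'m) cat \<Rightarrow> ('m \<Rightarrow> 'c) \<Rightarrow> ('c set, 'c set) cat" where
  "Ucat G lam =
    \<lparr> Obj = s0 G lam ` I0 G lam,
      Mor = s1 G lam ` I1 G lam,
      Dom = (\<lambda>A. s0 G lam (lam0 G lam (Dom G (SOME f. f \<in> Mor G \<and> s1 G lam (lam f) = A)))),
      Cod = (\<lambda>A. s0 G lam (lam0 G lam (Cod G (SOME f. f \<in> Mor G \<and> s1 G lam (lam f) = A)))),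
      Comp = (\<lambda>A B. s1 G lam (lam (case (SOME (f, g). f \<in> Mor G \<and> g \<in> Mor G \<and> Dom G f = Cod G g \<and>
                         s1 G lam (lam f) = A \<and> s1 G lam (lam g) = B) of (f, g) \<Rightarrow> Comp G f g))),
      Ide = (\<lambda>X. s1 G lam (lam (Ide G (SOME x. x \<in> Obj G \<and> s0 G lam (lam0 G lam x) = X)))) \<rparr>"

text \<open>varpi = (lambar, s1), lambar given by its object and morphism parts.\<close>
definition lambar_obj :: "('o,'m) cat \<Rightarrow> ('m \<Rightarrow> 'c) \<Rightarrow> 'o \<Rightarrow> 'c set" where
  "lambar_obj G lam x = s0 G lam (lam0 G lam x)"

definition lambar_mor :: "('o,'m) cat \<Rightarrow> ('m \<Rightarrow> 'c) \<Rightarrow> 'm \<Rightarrow> 'c set" where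
  "lambar_mor G lam f = s1 G lam (lam f)"

text \<open>Elements of (Z/nZ)^d: functions nat => nat with values < n at indices < d, zero elsewhere.\<close>
definition Hvec :: "nat \<Rightarrow> nat \<Rightarrow> (nat \<Rightarrow> nat) set" where
  "Hvec d n = {x. (\<forall>i<d. x i < n) \<and> (\<forall>i\<ge>d. x i = 0)}"

definition vadd :: "nat \<Rightarrow> (nat \<Rightarrow> nat) \<Rightarrow> (nat \<Rightarrow> nat) \<Rightarrow> (nat \<Rightarrow> nat)" where
  "vadd n x y = (\<lambda>i. (x i + y i) mod n)"

definition hweight :: "nat \<Rightarrow> (nat \<Rightarrow> nat) \<Rightarrow> nat" where
  "hweight d x = card {i. i < d \<and> x i \<noteq> 0}"

definition Hcat :: "nat \<Rightarrow> nat \<Rightarrow> (nat \<Rightarrow> nat, (nat \<Rightarrow> nat) \<times> (nat \<Rightarrow> nat)) cat" where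
  "Hcat d n =
    \<lparr> Obj = Hvec d n,
      Mor = Hvec d n \<times> Hvec d n,
      Dom = (\<lambda>(g, x). x),
      Cod = (\<lambda>(g, x). vadd n g x),
      Comp = (\<lambda>(h, y) (g, x). (vadd n h g, x)),
      Ide = (\<lambda>x. ((\<lambda>i. 0), x)) \<rparr>"

definition Hcol :: "nat \<Rightarrow> (nat \<Rightarrow> nat) \<times> (nat \<Rightarrow> nat) \<Rightarrow> nat" where
  "Hcol d f = hweight d (fst f)"

definition Z2grp :: "(unit, nat) cat" where
  "Z2grp = \<lparr> Obj = {()}, Mor = {0, 1}, Dom = (\<lambda>_. ()), Cod = (\<lambda>_. ()),
             Comp = (\<lambda>a b. (a + b) mod 2), Ide = (\<lambda>_. 0) \<rparr>"

end

theory Submission imports Defs begin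

definition seg :: "nat \<Rightarrow> nat \<Rightarrow> nat \<Rightarrow> nat" where
  "seg l r = (\<lambda>i. if l \<le> i \<and> i < r then 1 else 0)"

lemma seg_Hvec: "r \<le> d \<Longrightarrow> seg l r \<in> Hvec d 2"
  by (auto simp: seg_def Hvec_def)

lemma zv_Hvec: "(\<lambda>i. 0) \<in> Hvec d 2"
  by (auto simp: Hvec_def)

lemma hweight_seg: assumes "r \<le> d" shows "hweight d (seg l r) = r - l"
proof -
  have "{i. i < d \<and> seg l r i \<noteq> 0} = {l..<r}" using assms by (auto simp: seg_def)
  thus ?thesis by (simp add: hweight_def)
qed

lemma vadd_Hvec: "x \<in> Hvec d 2 \<Longrightarrow> y \<in> Hvec d 2 \<Longrightarrow> vadd 2 x y \<in> Hvec d 2"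
  by (auto simp: Hvec_def vadd_def)

lemma hweight_sum: assumes "x \<in> Hvec d 2" shows "hweight d x = (\<Sum>i<d. x i)"
proof -
  have x01: "\<And>i. i < d \<Longrightarrow> x i = (if x i \<noteq> 0 then 1 else 0)"
  proof -
    fix i assume "i < d" hence "x i < 2" using assms by (auto simp: Hvec_def)
    thus "x i = (if x i \<noteq> 0 then 1 else 0)" by auto
  qed
  have "(\<Sum>i<d. x i) = (\<Sum>i<d. (if x i \<noteq> 0 then 1 else 0))"
    by (rule sum.cong) (metis x01 lessThan_iff)+
  also have "\<dots> = card {i. i < d \<and> x i \<noteq> 0}"
    by (simp add: sum.If_cases lessThan_def Collect_conj_eq Int_commute)
  finally show ?thesis by (simp add: hweight_def)
qed

lemma sum_vadd: "(\<Sum>i<d. vadd 2 x y i) mod 2 = ((\<Sum>i<d. x i) + (\<Sum>i<d. y i)) mod 2"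
proof -
  have "(\<Sum>i<d. vadd 2 x y i) mod 2 = (\<Sum>i<d. (x i + y i)) mod 2"
    unfolding vadd_def by (simp add: mod_sum_eq)
  thus ?thesis by (simp add: sum.distrib)
qed

lemma hweight_vadd: "x \<in> Hvec d 2 \<Longrightarrow> y \<in> Hvec d 2 \<Longrightarrow>
   hweight d (vadd 2 x y) mod 2 = (hweight d x + hweight d y) mod 2"
  using hweight_sum[of x d] hweight_sum[of y d] hweight_sum[OF vadd_Hvec, of x d y] sum_vadd[where d=d and x=x and y=y]
  by simp

lemma hweight_le: "hweight d x \<le> d"
proof -
  have "{i. i < d \<and> x i \<noteq> 0} \<subseteq> {..<d}" by auto
  from card_mono[OF _ this] show ?thesis by (simp add: hweight_def)
qed

lemma seg_vadd1: "q \<le> p \<Longrightarrow> vadd 2 (seg 0 p) (seg 0 q) = seg q p"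
  by (auto simp: vadd_def seg_def)

lemma seg_vadd2: "vadd 2 (seg 0 p) (seg p (p+q)) = seg 0 (p+q)"
  by (auto simp: vadd_def seg_def)

lemma vadd_zero: assumes "x \<in> Hvec d 2" shows "vadd 2 (\<lambda>i. 0) x = x"
proof
  fix i show "vadd 2 (\<lambda>i. 0) x i = x i"
    using assms by (cases "i < d") (auto simp: vadd_def Hvec_def)
qed


lemma H_simps[simp]: "Obj (Hcat d n) = Hvec d n" "Mor (Hcat d n) = Hvec d n \<times> Hvec d n"
  "Dom (Hcat d n) (g, x) = x" "Cod (Hcat d n) (g, x) = vadd n g x"
  "Comp (Hcat d n) (h, y) (g, x) = (vadd n h g, x)" "Ide (Hcat d n) x = ((\<lambda>i. 0), x)"
  by (simp_all add: Hcat_def)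

lemma Hcol_simp[simp]: "Hcol d (g, x) = hweight d g" by (simp add: Hcol_def)

lemma hweight_zero[simp]: "hweight d (\<lambda>i. 0) = 0" by (simp add: hweight_def)

lemma I1_eq: "I1 (Hcat d 2) (Hcol d) = {0..d}"
proof
  show "I1 (Hcat d 2) (Hcol d) \<subseteq> {0..d}" using hweight_le by (auto simp: I1_def Hcol_def)
  show "{0..d} \<subseteq> I1 (Hcat d 2) (Hcol d)"
  proof
    fix a assume "a \<in> {0..d}"
    hence "(seg 0 a, \<lambda>i. 0) \<in> Mor (Hcat d 2)" "Hcol d (seg 0 a, \<lambda>i. 0) = a"
      using seg_Hvec zv_Hvec hweight_seg by auto
    thus "a \<in> I1 (Hcat d 2) (Hcol d)" unfolding I1_def by (metis image_eqI)
  qed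
qed

lemma comp_list_H: "fs \<noteq> [] \<Longrightarrow> set fs \<subseteq> Mor (Hcat d 2) \<Longrightarrow>
   comp_list (Hcat d 2) fs \<in> Mor (Hcat d 2) \<and>
   Hcol d (comp_list (Hcat d 2) fs) mod 2 = sum_list (map (Hcol d) fs) mod 2"
proof (induction fs)
  case Nil thus ?case by simp
next
  case (Cons f fs)
  show ?case
  proof (cases fs)
    case Nil thus ?thesis using Cons.prems by simp
  next
    case (Cons g gs)
    hence IH: "comp_list (Hcat d 2) fs \<in> Mor (Hcat d 2) \<and>
      Hcol d (comp_list (Hcat d 2) fs) mod 2 = sum_list (map (Hcol d) fs) mod 2"
      using Cons.IH Cons.prems by auto
    obtain h y where hy: "comp_list (Hcat d 2) fs = (h, y)" by fastforce
    obtain k z where f: "f = (k, z)" by fastforce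
    have mem: "h \<in> Hvec d 2" "y \<in> Hvec d 2" "k \<in> Hvec d 2" "z \<in> Hvec d 2"
      using IH hy f Cons.prems by auto
    have cl: "comp_list (Hcat d 2) (f # fs) = (vadd 2 k h, y)"
      using Cons hy f by simp
    have "Hcol d (vadd 2 k h, y) mod 2 = (hweight d k + hweight d h) mod 2"
      using hweight_vadd mem by simp
    also have "\<dots> = (hweight d k + sum_list (map (Hcol d) fs)) mod 2"
      using IH hy by (metis Hcol_simp mod_add_right_eq)
    finally have "Hcol d (comp_list (Hcat d 2) (f # fs)) mod 2 = sum_list (map (Hcol d) (f # fs)) mod 2"
      using cl f by simp
    moreover have "comp_list (Hcat d 2) (f # fs) \<in> Mor (Hcat d 2)"
      using cl mem vadd_Hvec by simp
    ultimately show ?thesis by blast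
  qed
qed

lemma chain_H: "chain (Hcat d 2) fs \<Longrightarrow>
   Hcol d (comp_list (Hcat d 2) fs) mod 2 = sum_list (map (Hcol d) fs) mod 2"
  using comp_list_H by (auto simp: chain_def)

lemma rel1_parity: assumes "rel1 (Hcat d 2) (Hcol d) a b" shows "a mod 2 = b mod 2"
proof -
  obtain fs gs where "chain (Hcat d 2) fs" "chain (Hcat d 2) gs" "map (Hcol d) fs = map (Hcol d) gs"
     "a = Hcol d (comp_list (Hcat d 2) fs)" "b = Hcol d (comp_list (Hcat d 2) gs)"
    using assms unfolding rel1_def by blast
  thus ?thesis using chain_H[of d fs] chain_H[of d gs] by simp
qed

lemma rel1_mem: assumes "rel1 (Hcat d 2) (Hcol d) a b" shows "b \<le> d"
proof -
  obtain gs where "b = Hcol d (comp_list (Hcat d 2) gs)"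
    using assms unfolding rel1_def by blast
  thus ?thesis using hweight_le unfolding Hcol_def by simp
qed

lemma chain2: "f \<in> Mor G \<Longrightarrow> g \<in> Mor G \<Longrightarrow> Dom G f = Cod G g \<Longrightarrow> chain G [f, g]"
  unfolding chain_def
proof (intro conjI allI impI)
  fix i assume "Suc i < length [f, g]" "Dom G f = Cod G g"
  thus "Dom G ([f, g] ! i) = Cod G ([f, g] ! Suc i)" by (cases i) auto
qed auto

lemma rel1_le: assumes "a \<le> b" "b \<le> d" "a mod 2 = b mod 2"
  shows "rel1 (Hcat d 2) (Hcol d) a b"
proof -
  define p where "p = (a + b) div 2"
  define q where "q = (b - a) div 2"
  have pq1: "q \<le> p" unfolding p_def q_def by (simp add: div_le_mono)
  define x where "x = a div 2"
  define y where "y = b div 2"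
  define r where "r = a mod 2"
  have ea: "a = 2*x + r" unfolding x_def r_def by simp
  have eb: "b = 2*y + r" unfolding y_def r_def using assms(3) by simp
  have le: "x \<le> y" unfolding x_def y_def using assms(1) by (rule div_le_mono)
  have s1: "a + b = 2*(x + y + r)" using ea eb by simp
  have s2: "b - a = 2*(y - x)" using ea eb le by simp
  have pe: "p = x + y + r" unfolding p_def s1 by simp
  have qe: "q = y - x" unfolding q_def s2 by simp
  have pq2: "p - q = a" using pe qe ea eb le by linarith
  have pq3: "p + q = b" using pe qe ea eb le by linarith
  let ?z = "\<lambda>i::nat. 0::nat"
  have pd: "p \<le> d" "q \<le> d" "p + q \<le> d" using pq1 pq3 assms(2) by linarith+
  have sp: "seg 0 p \<in> Hvec d 2" "seg 0 q \<in> Hvec d 2" "seg p (p+q) \<in> Hvec d 2"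
    using pd by (simp_all add: seg_Hvec)
  have zz: "?z \<in> Hvec d 2" by (rule zv_Hvec)
  define fs where "fs = [(seg 0 p, vadd 2 (seg 0 q) ?z), (seg 0 q, ?z)]"
  define gs where "gs = [(seg 0 p, vadd 2 (seg p (p+q)) ?z), (seg p (p+q), ?z)]"
  have c1: "chain (Hcat d 2) fs"
    unfolding fs_def using sp zz vadd_Hvec[OF sp(2) zz] by (intro chain2) auto
  have c2: "chain (Hcat d 2) gs"
    unfolding gs_def using sp zz vadd_Hvec[OF sp(3) zz] by (intro chain2) auto
  have hp: "hweight d (seg 0 p) = p" "hweight d (seg 0 q) = q" "hweight d (seg p (p+q)) = q"
    using pd by (simp_all add: hweight_seg)
  have m: "map (Hcol d) fs = map (Hcol d) gs"
    unfolding fs_def gs_def using hp by simp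
  have "Hcol d (comp_list (Hcat d 2) fs) = hweight d (seg q p)"
    unfolding fs_def using seg_vadd1[OF pq1] by simp
  hence ea: "a = Hcol d (comp_list (Hcat d 2) fs)"
    using hweight_seg[OF pd(1), of q] pq2 by simp
  have "Hcol d (comp_list (Hcat d 2) gs) = hweight d (seg 0 (p+q))"
    unfolding gs_def using seg_vadd2 by simp
  hence eb: "b = Hcol d (comp_list (Hcat d 2) gs)"
    using hweight_seg[OF pd(3), of 0] pq3 by simp
  show ?thesis unfolding rel1_def using c1 c2 m ea eb by blast
qed

lemma rel1_sym: "rel1 G lam a b \<Longrightarrow> rel1 G lam b a"
  unfolding rel1_def by (elim exE conjE) (intro exI conjI, assumption+, rule sym, assumption+)

lemma rel1_iff: assumes "a \<le> d" shows "rel1 (Hcat d 2) (Hcol d) a b \<longleftrightarrow> b \<le> d \<and> a mod 2 = b mod 2"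
proof
  assume "rel1 (Hcat d 2) (Hcol d) a b" thus "b \<le> d \<and> a mod 2 = b mod 2"
    using rel1_parity rel1_mem by blast
next
  assume b: "b \<le> d \<and> a mod 2 = b mod 2"
  show "rel1 (Hcat d 2) (Hcol d) a b"
  proof (cases "a \<le> b")
    case True thus ?thesis using b rel1_le by blast
  next
    case False
    hence "rel1 (Hcat d 2) (Hcol d) b a" using b assms rel1_le[of b a d] by auto
    thus ?thesis by (rule rel1_sym)
  qed
qed

definition cls :: "nat \<Rightarrow> nat \<Rightarrow> nat set" where
  "cls d a = {b. b \<le> d \<and> b mod 2 = a mod 2}"

lemma s1_eq: "a \<le> d \<Longrightarrow> s1 (Hcat d 2) (Hcol d) a = cls d a"
  unfolding s1_def cls_def I1_eq by (auto simp: rel1_iff)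


lemma lam0_H[simp]: "lam0 (Hcat d 2) (Hcol d) x = 0"
  by (simp add: lam0_def)

lemma I0_eq: "I0 (Hcat d 2) (Hcol d) = {0}"
  using zv_Hvec[of d] by (auto simp: I0_def)

lemma s0_0: "s0 (Hcat d 2) (Hcol d) 0 = {0}"
  by (auto simp: s0_def I0_eq)

lemma cls_mod: "cls d a = cls d (a mod 2)" by (simp add: cls_def)

definition Phim :: "nat set \<Rightarrow> nat" where "Phim A = (if 1 \<in> A then 1 else 0)"

lemma Phim_cls: "1 \<le> d \<Longrightarrow> Phim (cls d a) = a mod 2"
  by (auto simp: Phim_def cls_def)

lemma cls_neq: "cls d 0 \<noteq> cls d 1"
proof
  assume e: "cls d 0 = cls d 1"
  have "(0::nat) \<in> cls d 0" by (simp add: cls_def)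
  hence "0 \<in> cls d 1" using e by simp
  thus False by (simp add: cls_def)
qed

lemma U_Obj: "Obj (Ucat (Hcat d 2) (Hcol d)) = {{0}}"
  by (simp add: Ucat_def I0_eq s0_0)

lemma U_Mor: "Mor (Ucat (Hcat d 2) (Hcol d)) = cls d ` {0..d}"
  by (simp add: Ucat_def I1_eq s1_eq)

lemma U_Mor2: "1 \<le> d \<Longrightarrow> Mor (Ucat (Hcat d 2) (Hcol d)) = {cls d 0, cls d 1}"
  unfolding U_Mor
proof
  show "cls d ` {0..d} \<subseteq> {cls d 0, cls d 1}"
  proof
    fix A assume "A \<in> cls d ` {0..d}"
    then obtain a where "A = cls d a" by auto
    hence "A = cls d (a mod 2)" using cls_mod by simp
    moreover have "a mod 2 = 0 \<or> a mod 2 = 1" by auto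
    ultimately show "A \<in> {cls d 0, cls d 1}" by auto
  qed
qed auto

lemma U_Dom: "Dom (Ucat (Hcat d 2) (Hcol d)) A = {0}"
  by (simp add: Ucat_def s0_0)
lemma U_Cod: "Cod (Ucat (Hcat d 2) (Hcol d)) A = {0}"
  by (simp add: Ucat_def s0_0)
lemma U_Ide: "Ide (Ucat (Hcat d 2) (Hcol d)) X = cls d 0"
  by (simp add: Ucat_def s1_eq)

lemma U_Comp:
  assumes d: "1 \<le> d" and A: "A \<in> Mor (Ucat (Hcat d 2) (Hcol d))" and B: "B \<in> Mor (Ucat (Hcat d 2) (Hcol d))"
  shows "Phim (Comp (Ucat (Hcat d 2) (Hcol d)) A B) = (Phim A + Phim B) mod 2"
proof -
  let ?H = "Hcat d 2" and ?l = "Hcol d"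
  define P where "P = (\<lambda>(f, g). f \<in> Mor ?H \<and> g \<in> Mor ?H \<and> Dom ?H f = Cod ?H g \<and>
                         s1 ?H ?l (?l f) = A \<and> s1 ?H ?l (?l g) = B)"
  obtain a b where ab: "a \<le> d" "b \<le> d" "A = cls d a" "B = cls d b" using A B unfolding U_Mor by auto
  let ?z = "\<lambda>i::nat. 0::nat"
  have ex: "P ((seg 0 a, vadd 2 (seg 0 b) ?z), (seg 0 b, ?z))"
    unfolding P_def using ab seg_Hvec[of a d 0] seg_Hvec[of b d 0] zv_Hvec[of d]
      vadd_Hvec[of "seg 0 b" d ?z] hweight_seg[of a d 0] hweight_seg[of b d 0]
    by (simp add: s1_eq)
  obtain f g where fg: "(SOME p. P p) = (f, g)" by (cases "SOME p. P p") auto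
  have Pfg: "P (f, g)" using someI[of P, OF ex] fg by simp
  obtain k y h x where f: "f = (k, y)" and g: "g = (h, x)" by fastforce
  have mem: "k \<in> Hvec d 2" "h \<in> Hvec d 2" and sA: "s1 ?H ?l (hweight d k) = A" and sB: "s1 ?H ?l (hweight d h) = B"
    using Pfg f g unfolding P_def by auto
  have PA: "Phim A = hweight d k mod 2" using sA s1_eq[OF hweight_le] Phim_cls[OF d] by metis
  have PB: "Phim B = hweight d h mod 2" using sB s1_eq[OF hweight_le] Phim_cls[OF d] by metis
  have "Comp (Ucat ?H ?l) A B = s1 ?H ?l (?l (case (SOME p. P p) of (f, g) \<Rightarrow> Comp ?H f g))"
    unfolding Ucat_def P_def by simp
  also have "\<dots> = s1 ?H ?l (hweight d (vadd 2 k h))" using fg f g by simp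
  also have "\<dots> = cls d (hweight d (vadd 2 k h))" by (rule s1_eq[OF hweight_le])
  finally have "Phim (Comp (Ucat ?H ?l) A B) = hweight d (vadd 2 k h) mod 2" using Phim_cls[OF d] by simp
  also have "\<dots> = (hweight d k + hweight d h) mod 2" using hweight_vadd mem by blast
  finally show ?thesis using PA PB by (simp add: mod_add_eq)
qed


lemma mc_functor_comp:
  assumes F: "mc_functor A la B lb Fo Fm fg" and G: "mc_functor B lb C lc Go Gm gg"
    and clos: "\<forall>f\<in>Mor A. Dom A f \<in> Obj A \<and> Cod A f \<in> Obj A"
      "\<forall>g\<in>Mor A. \<forall>f\<in>Mor A. Dom A g = Cod A f \<longrightarrow> Comp A g f \<in> Mor A"
      "\<forall>x\<in>Obj A. Ide A x \<in> Mor A"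
  shows "mc_functor A la C lc (compose (Obj A) Go Fo) (compose (Mor A) Gm Fm) (compose (la ` Mor A) gg fg)"
proof -
  have Ff: "is_functor A B Fo Fm" and Fg: "\<forall>f\<in>Mor A. fg (la f) = lb (Fm f)"
    using F by (auto simp: mc_functor_def)
  have Gf: "is_functor B C Go Gm" and Gg: "\<forall>f\<in>Mor B. gg (lb f) = lc (Gm f)"
    using G by (auto simp: mc_functor_def)
  have "is_functor A C (compose (Obj A) Go Fo) (compose (Mor A) Gm Fm)"
    using Ff Gf clos unfolding is_functor_def compose_def by auto
  moreover have "\<forall>f\<in>Mor A. compose (la ` Mor A) gg fg (la f) = lc (compose (Mor A) Gm Fm f)"
    using Fg Gg Ff unfolding compose_def is_functor_def by auto
  ultimately show ?thesis unfolding mc_functor_def by (auto intro: compose_extensional)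
qed

lemma Z2_simps[simp]: "Obj Z2grp = {()}" "Mor Z2grp = {0, 1}" "Dom Z2grp a = ()" "Cod Z2grp a = ()"
  "Comp Z2grp a b = (a + b) mod 2" "Ide Z2grp u = 0"
  by (simp_all add: Z2grp_def)

lemma H_clos:
  "\<forall>f\<in>Mor (Hcat d 2). Dom (Hcat d 2) f \<in> Obj (Hcat d 2) \<and> Cod (Hcat d 2) f \<in> Obj (Hcat d 2)"
  "\<forall>g\<in>Mor (Hcat d 2). \<forall>f\<in>Mor (Hcat d 2). Dom (Hcat d 2) g = Cod (Hcat d 2) f \<longrightarrow> Comp (Hcat d 2) g f \<in> Mor (Hcat d 2)"
  "\<forall>x\<in>Obj (Hcat d 2). Ide (Hcat d 2) x \<in> Mor (Hcat d 2)"
  using vadd_Hvec zv_Hvec by auto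

definition Po :: "nat \<Rightarrow> (nat \<Rightarrow> nat) \<Rightarrow> unit" where "Po d = restrict (\<lambda>x. ()) (Obj (Hcat d 2))"
definition Pm :: "nat \<Rightarrow> (nat \<Rightarrow> nat) \<times> (nat \<Rightarrow> nat) \<Rightarrow> nat" where
  "Pm d = restrict (\<lambda>(g, x). (\<Sum>i<d. g i) mod 2) (Mor (Hcat d 2))"
definition Pg :: "nat \<Rightarrow> nat \<Rightarrow> nat" where "Pg d = restrict (\<lambda>a. a mod 2) {0..d}"

lemma Hcol_image: "Hcol d ` Mor (Hcat d 2) = {0..d}"
  using I1_eq unfolding I1_def .

lemma P_mc: "mc_functor (Hcat d 2) (Hcol d) Z2grp id (Po d) (Pm d) (Pg d)"
proof -
  have "is_functor (Hcat d 2) Z2grp (Po d) (Pm d)"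
    unfolding is_functor_def Po_def Pm_def
  proof (intro conjI ballI)
    fix g f assume g: "g \<in> Mor (Hcat d 2)" and f: "f \<in> Mor (Hcat d 2)"
    obtain h y k x where gg: "g = (h, y)" and ff: "f = (k, x)" by fastforce
    show "Dom (Hcat d 2) g = Cod (Hcat d 2) f \<longrightarrow>
         restrict (\<lambda>(g, x). (\<Sum>i<d. g i) mod 2) (Mor (Hcat d 2)) (Comp (Hcat d 2) g f) =
         Comp Z2grp (restrict (\<lambda>(g, x). (\<Sum>i<d. g i) mod 2) (Mor (Hcat d 2)) g)
          (restrict (\<lambda>(g, x). (\<Sum>i<d. g i) mod 2) (Mor (Hcat d 2)) f)"
      using g f gg ff vadd_Hvec[of h d k] vadd_Hvec[of k d x] sum_vadd[where d=d and x=h and y=k]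
      by (simp add: mod_add_eq)
  qed (auto simp: zv_Hvec)
  moreover have "\<forall>f\<in>Mor (Hcat d 2). Pg d (Hcol d f) = id (Pm d f)"
  proof
    fix f assume f: "f \<in> Mor (Hcat d 2)"
    obtain k x where ff: "f = (k, x)" by fastforce
    show "Pg d (Hcol d f) = id (Pm d f)"
      using f ff hweight_le[of d k] hweight_sum[of k d] by (simp add: Pg_def Pm_def)
  qed
  ultimately show ?thesis unfolding mc_functor_def Hcol_image by (simp add: Po_def Pm_def Pg_def)
qed


lemma pairs_le: assumes "a \<le> b" "b \<le> d" "a mod 2 = b mod 2"
  shows "\<exists>f1 f2 g1 g2. f1 \<in> Mor (Hcat d 2) \<and> f2 \<in> Mor (Hcat d 2) \<and> g1 \<in> Mor (Hcat d 2) \<and> g2 \<in> Mor (Hcat d 2)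
    \<and> Dom (Hcat d 2) f1 = Cod (Hcat d 2) f2 \<and> Dom (Hcat d 2) g1 = Cod (Hcat d 2) g2
    \<and> Hcol d f1 = Hcol d g1 \<and> Hcol d f2 = Hcol d g2
    \<and> Hcol d (Comp (Hcat d 2) f1 f2) = a \<and> Hcol d (Comp (Hcat d 2) g1 g2) = b"
proof -
  define p where "p = (a + b) div 2"
  define q where "q = (b - a) div 2"
  have pq1: "q \<le> p" unfolding p_def q_def by (simp add: div_le_mono)
  define x where "x = a div 2"
  define y where "y = b div 2"
  define r where "r = a mod 2"
  have ea: "a = 2*x + r" unfolding x_def r_def by simp
  have eb: "b = 2*y + r" unfolding y_def r_def using assms(3) by simp
  have le: "x \<le> y" unfolding x_def y_def using assms(1) by (rule div_le_mono)
  have s1: "a + b = 2*(x + y + r)" using ea eb by simp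
  have s2: "b - a = 2*(y - x)" using ea eb le by simp
  have pe: "p = x + y + r" unfolding p_def s1 by simp
  have qe: "q = y - x" unfolding q_def s2 by simp
  have pq2: "p - q = a" using pe qe ea eb le by linarith
  have pq3: "p + q = b" using pe qe ea eb le by linarith
  let ?z = "\<lambda>i::nat. 0::nat"
  have pd: "p \<le> d" "q \<le> d" "p + q \<le> d" using pq1 pq3 assms(2) by linarith+
  have sp: "seg 0 p \<in> Hvec d 2" "seg 0 q \<in> Hvec d 2" "seg p (p+q) \<in> Hvec d 2"
    using pd by (simp_all add: seg_Hvec)
  have zz: "?z \<in> Hvec d 2" by (rule zv_Hvec)
  have hp: "hweight d (seg 0 p) = p" "hweight d (seg 0 q) = q" "hweight d (seg p (p+q)) = q"
    using pd by (simp_all add: hweight_seg)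
  have "hweight d (vadd 2 (seg 0 p) (seg 0 q)) = a"
    using seg_vadd1[OF pq1] hweight_seg[OF pd(1), of q] pq2 by simp
  moreover have "hweight d (vadd 2 (seg 0 p) (seg p (p+q))) = b"
    unfolding seg_vadd2 using hweight_seg[OF pd(3), of 0] pq3 by simp
  ultimately show ?thesis
    using sp zz vadd_Hvec[OF sp(2) zz] vadd_Hvec[OF sp(3) zz] hp
    by (intro exI[of _ "(seg 0 p, vadd 2 (seg 0 q) ?z)"] exI[of _ "(seg 0 q, ?z)"]
        exI[of _ "(seg 0 p, vadd 2 (seg p (p+q)) ?z)"] exI[of _ "(seg p (p+q), ?z)"]) simp
qed

lemma Fm_gam: "mc_functor (Hcat d 2) (Hcol d) C id Fo Fm gam \<Longrightarrow> f \<in> Mor (Hcat d 2) \<Longrightarrow> Fm f = gam (Hcol d f)"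
  unfolding mc_functor_def by (metis id_apply)

lemma gam_parity_le:
  assumes F: "mc_functor (Hcat d 2) (Hcol d) C id Fo Fm gam"
    and ab: "a \<le> b" "b \<le> d" "a mod 2 = b mod 2"
  shows "gam a = gam b"
proof -
  obtain f1 f2 g1 g2 where P: "f1 \<in> Mor (Hcat d 2)" "f2 \<in> Mor (Hcat d 2)" "g1 \<in> Mor (Hcat d 2)" "g2 \<in> Mor (Hcat d 2)"
    "Dom (Hcat d 2) f1 = Cod (Hcat d 2) f2" "Dom (Hcat d 2) g1 = Cod (Hcat d 2) g2"
    "Hcol d f1 = Hcol d g1" "Hcol d f2 = Hcol d g2"
    "Hcol d (Comp (Hcat d 2) f1 f2) = a" "Hcol d (Comp (Hcat d 2) g1 g2) = b"
    using pairs_le[OF ab] by blast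
  have Ffun: "is_functor (Hcat d 2) C Fo Fm" using F by (simp add: mc_functor_def)
  have c1: "Comp (Hcat d 2) f1 f2 \<in> Mor (Hcat d 2)" "Comp (Hcat d 2) g1 g2 \<in> Mor (Hcat d 2)"
    using H_clos(2) P by blast+
  have "gam a = Fm (Comp (Hcat d 2) f1 f2)" using Fm_gam[OF F c1(1)] P by simp
  also have "\<dots> = Comp C (Fm f1) (Fm f2)" using Ffun P unfolding is_functor_def by blast
  also have "\<dots> = Comp C (Fm g1) (Fm g2)" using Fm_gam[OF F] P by simp
  also have "\<dots> = Fm (Comp (Hcat d 2) g1 g2)" using Ffun P unfolding is_functor_def by metis
  also have "\<dots> = gam b" using Fm_gam[OF F c1(2)] P by simp
  finally show ?thesis .
qed

lemma gam_parity:
  assumes F: "mc_functor (Hcat d 2) (Hcol d) C id Fo Fm gam"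
    and ab: "a \<le> d" "b \<le> d" "a mod 2 = b mod 2"
  shows "gam a = gam b"
proof (cases "a \<le> b")
  case True thus ?thesis using gam_parity_le[OF F True] ab by blast
next
  case False thus ?thesis using gam_parity_le[OF F, of b a] ab by simp
qed


definition G0 :: "('o, 'm) cat \<Rightarrow> (nat \<Rightarrow> 'm) \<Rightarrow> (unit \<Rightarrow> 'o) \<times> (nat \<Rightarrow> 'm) \<times> (nat \<Rightarrow> 'm)" where
  "G0 C gam = (restrict (\<lambda>_. Dom C (gam 0)) {()}, restrict gam {0, 1}, restrict gam {0, 1})"

lemma seg01: "a \<in> {0, 1::nat} \<Longrightarrow> 1 \<le> d \<Longrightarrow> (seg 0 a, \<lambda>i. 0) \<in> Mor (Hcat d 2) \<and> Hcol d (seg 0 a, \<lambda>i. 0) = a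
   \<and> Pm d (seg 0 a, \<lambda>i. 0) = a"
  using seg_Hvec[of a d 0] zv_Hvec[of d] hweight_seg[of a d 0] hweight_sum[of "seg 0 a" d]
  by (auto simp: Pm_def)

lemma isf_obj: "is_functor C D Fo Fm \<Longrightarrow> x \<in> Obj C \<Longrightarrow> Fo x \<in> Obj D"
  unfolding is_functor_def by blast
lemma isf_mor: "is_functor C D Fo Fm \<Longrightarrow> f \<in> Mor C \<Longrightarrow> Fm f \<in> Mor D \<and> Dom D (Fm f) = Fo (Dom C f) \<and> Cod D (Fm f) = Fo (Cod C f)"
  unfolding is_functor_def by blast
lemma isf_comp: "is_functor C D Fo Fm \<Longrightarrow> g \<in> Mor C \<Longrightarrow> f \<in> Mor C \<Longrightarrow> Dom C g = Cod C f \<Longrightarrow> Fm (Comp C g f) = Comp D (Fm g) (Fm f)"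
  unfolding is_functor_def by blast
lemma isf_ide: "is_functor C D Fo Fm \<Longrightarrow> x \<in> Obj C \<Longrightarrow> Fm (Ide C x) = Ide D (Fo x)"
  unfolding is_functor_def by blast

lemma F_facts:
  assumes F: "mc_functor (Hcat d 2) (Hcol d) C id Fo Fm gam" and d: "1 \<le> d"
  shows "\<And>x. x \<in> Obj (Hcat d 2) \<Longrightarrow> Fo x = Dom C (gam 0)"
    and "\<And>f. f \<in> Mor (Hcat d 2) \<Longrightarrow> Fm f = gam (Hcol d f mod 2)"
    and "\<And>a. a \<le> d \<Longrightarrow> gam a = gam (a mod 2)"
    and "Dom C (gam 0) \<in> Obj C"
    and "\<And>a. a \<in> {0,1} \<Longrightarrow> gam a \<in> Mor C \<and> Dom C (gam a) = Dom C (gam 0) \<and> Cod C (gam a) = Dom C (gam 0)"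
    and "\<And>a b. a \<in> {0,1} \<Longrightarrow> b \<in> {0,1} \<Longrightarrow> gam ((a + b) mod 2) = Comp C (gam a) (gam b)"
    and "gam 0 = Ide C (Dom C (gam 0))"
proof -
  have Ff: "is_functor (Hcat d 2) C Fo Fm" using F by (simp add: mc_functor_def)
  let ?z = "\<lambda>i::nat. 0::nat"
  have z: "?z \<in> Obj (Hcat d 2)" using zv_Hvec by simp
  show Fo: "\<And>x. x \<in> Obj (Hcat d 2) \<Longrightarrow> Fo x = Dom C (gam 0)"
  proof -
    fix x assume x: "x \<in> Obj (Hcat d 2)"
    have I: "Ide (Hcat d 2) x \<in> Mor (Hcat d 2)" using H_clos(3) x by blast
    have "Fm (Ide (Hcat d 2) x) = gam 0" using Fm_gam[OF F I] by simp
    moreover have "Dom C (Fm (Ide (Hcat d 2) x)) = Fo x" using isf_mor[OF Ff I] by simp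
    ultimately show "Fo x = Dom C (gam 0)" by simp
  qed
  show par: "\<And>a. a \<le> d \<Longrightarrow> gam a = gam (a mod 2)"
  proof -
    fix a assume a: "a \<le> d"
    have "a mod 2 \<le> d" using d by (simp add: le_trans[OF _ d])
    thus "gam a = gam (a mod 2)" using gam_parity[OF F a] by simp
  qed
  show "\<And>f. f \<in> Mor (Hcat d 2) \<Longrightarrow> Fm f = gam (Hcol d f mod 2)"
  proof -
    fix f assume f: "f \<in> Mor (Hcat d 2)"
    have "Hcol d f \<le> d" unfolding Hcol_def by (rule hweight_le)
    from Fm_gam[OF F f] par[OF this] show "Fm f = gam (Hcol d f mod 2)" by (rule trans)
  qed
  show "Dom C (gam 0) \<in> Obj C" using Fo[OF z] isf_obj[OF Ff z] by simp
  show "\<And>a. a \<in> {0,1} \<Longrightarrow> gam a \<in> Mor C \<and> Dom C (gam a) = Dom C (gam 0) \<and> Cod C (gam a) = Dom C (gam 0)"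
  proof -
    fix a :: nat assume a: "a \<in> {0,1}"
    note s = seg01[OF a d]
    have m: "Fm (seg 0 a, ?z) = gam a" using Fm_gam[OF F] s by simp
    have o: "Dom (Hcat d 2) (seg 0 a, ?z) \<in> Obj (Hcat d 2)" "Cod (Hcat d 2) (seg 0 a, ?z) \<in> Obj (Hcat d 2)"
      using H_clos(1) s by blast+
    show "gam a \<in> Mor C \<and> Dom C (gam a) = Dom C (gam 0) \<and> Cod C (gam a) = Dom C (gam 0)"
    proof -
      have fm: "(seg 0 a, ?z) \<in> Mor (Hcat d 2)" using s by blast
      note k = isf_mor[OF Ff fm]
      show ?thesis using k m Fo[OF o(1)] Fo[OF o(2)] by simp
    qed
  qed
  show "\<And>a b. a \<in> {0,1} \<Longrightarrow> b \<in> {0,1} \<Longrightarrow> gam ((a + b) mod 2) = Comp C (gam a) (gam b)"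
  proof -
    fix a b :: nat assume a: "a \<in> {0,1}" and b: "b \<in> {0,1}"
    have sa: "seg 0 a \<in> Hvec d 2" "seg 0 b \<in> Hvec d 2" using seg01[OF a d] seg01[OF b d] by auto
    define f where "f = (seg 0 a, vadd 2 (seg 0 b) ?z)"
    define g where "g = (seg 0 b, ?z)"
    have fg: "f \<in> Mor (Hcat d 2)" "g \<in> Mor (Hcat d 2)" "Dom (Hcat d 2) f = Cod (Hcat d 2) g"
      unfolding f_def g_def using sa vadd_Hvec[OF sa(2) zv_Hvec] zv_Hvec by auto
    have c: "Comp (Hcat d 2) f g \<in> Mor (Hcat d 2)" using H_clos(2) fg by blast
    have "Fm (Comp (Hcat d 2) f g) = Comp C (Fm f) (Fm g)" using isf_comp[OF Ff fg] .
    moreover have "Fm f = gam a" "Fm g = gam b"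
      using Fm_gam[OF F fg(1)] Fm_gam[OF F fg(2)] seg01[OF a d] seg01[OF b d] unfolding f_def g_def by simp_all
    moreover have "Fm (Comp (Hcat d 2) f g) = gam ((a + b) mod 2)"
    proof -
      have "Fm (Comp (Hcat d 2) f g) = gam (hweight d (vadd 2 (seg 0 a) (seg 0 b)))"
        using Fm_gam[OF F c] unfolding f_def g_def by simp
      also have "\<dots> = gam (hweight d (vadd 2 (seg 0 a) (seg 0 b)) mod 2)" by (rule par[OF hweight_le])
      also have "hweight d (vadd 2 (seg 0 a) (seg 0 b)) mod 2 = (a + b) mod 2"
        using hweight_vadd[OF sa] seg01[OF a d] seg01[OF b d] by simp
      finally show ?thesis .
    qed
    ultimately show "gam ((a + b) mod 2) = Comp C (gam a) (gam b)" by simp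
  qed
  show "gam 0 = Ide C (Dom C (gam 0))"
  proof -
    have I: "Ide (Hcat d 2) ?z \<in> Mor (Hcat d 2)" using H_clos(3) z by blast
    have "Fm (Ide (Hcat d 2) ?z) = gam 0" using Fm_gam[OF F I] by simp
    moreover have "Fm (Ide (Hcat d 2) ?z) = Ide C (Fo ?z)" using isf_ide[OF Ff z] .
    ultimately show ?thesis using Fo[OF z] by simp
  qed
qed


lemma mod2_cases: "(n::nat) mod 2 \<in> {0, 1}" by auto

lemma G0_mc:
  assumes F: "mc_functor (Hcat d 2) (Hcol d) C id Fo Fm gam" and d: "1 \<le> d"
  shows "G0 C gam \<in> mc_functors Z2grp id C id"
proof -
  note FF = F_facts[OF F d]
  have "is_functor Z2grp C (restrict (\<lambda>_. Dom C (gam 0)) {()}) (restrict gam {0, 1})"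
    unfolding is_functor_def
  proof (intro conjI ballI)
    fix x assume "x \<in> Obj Z2grp" thus "restrict (\<lambda>_. Dom C (gam 0)) {()} x \<in> Obj C" using FF(4) by simp
  next
    fix f assume f: "f \<in> Mor Z2grp"
    thus "restrict gam {0, 1} f \<in> Mor C" using FF(5)[of f] by simp
  next
    fix f assume f: "f \<in> Mor Z2grp"
    thus "Dom C (restrict gam {0, 1} f) = restrict (\<lambda>_. Dom C (gam 0)) {()} (Dom Z2grp f)"
      using FF(5)[of f] by simp
  next
    fix f assume f: "f \<in> Mor Z2grp"
    thus "Cod C (restrict gam {0, 1} f) = restrict (\<lambda>_. Dom C (gam 0)) {()} (Cod Z2grp f)"
      using FF(5)[of f] by simp
  next
    fix g f assume g: "g \<in> Mor Z2grp" and f: "f \<in> Mor Z2grp"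
    show "Dom Z2grp g = Cod Z2grp f \<longrightarrow>
         restrict gam {0, 1} (Comp Z2grp g f) = Comp C (restrict gam {0, 1} g) (restrict gam {0, 1} f)"
      using FF(6)[of g f] g f mod2_cases[of "g + f"] by simp
  next
    fix x assume "x \<in> Obj Z2grp"
    thus "restrict gam {0, 1} (Ide Z2grp x) = Ide C (restrict (\<lambda>_. Dom C (gam 0)) {()} x)"
      using FF(7) by simp
  qed
  thus ?thesis unfolding G0_def mc_functors_def mc_functor_def by simp
qed

lemma G0_comp:
  assumes F: "mc_functor (Hcat d 2) (Hcol d) C id Fo Fm gam" and d: "1 \<le> d"
  shows "mc_comp (Hcat d 2) (Hcol d) (G0 C gam) (Po d, Pm d, Pg d) = (Fo, Fm, gam)"
proof -
  note FF = F_facts[OF F d]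
  have ext: "Fo \<in> extensional (Obj (Hcat d 2))" "Fm \<in> extensional (Mor (Hcat d 2))"
      "gam \<in> extensional (Hcol d ` Mor (Hcat d 2))"
    using F unfolding mc_functor_def by blast+
  have 1: "compose (Obj (Hcat d 2)) (restrict (\<lambda>_. Dom C (gam 0)) {()}) (Po d) = Fo"
  proof
    fix x show "compose (Obj (Hcat d 2)) (restrict (\<lambda>_. Dom C (gam 0)) {()}) (Po d) x = Fo x"
      using FF(1)[of x] ext(1) by (cases "x \<in> Obj (Hcat d 2)") (auto simp: compose_def Po_def extensional_def)
  qed
  have 2: "compose (Mor (Hcat d 2)) (restrict gam {0, 1}) (Pm d) = Fm"
  proof
    fix f show "compose (Mor (Hcat d 2)) (restrict gam {0, 1}) (Pm d) f = Fm f"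
    proof (cases "f \<in> Mor (Hcat d 2)")
      case True
      obtain k x where f: "f = (k, x)" by fastforce
      have "Pm d f = Hcol d f mod 2" using True f hweight_sum[of k d] by (simp add: Pm_def)
      thus ?thesis using True FF(2)[OF True] mod2_cases[of "Hcol d f"] by (simp add: compose_def)
    next
      case False thus ?thesis using extensional_arb[OF ext(2) False] by (simp add: compose_def)
    qed
  qed
  have 3: "compose (Hcol d ` Mor (Hcat d 2)) (restrict gam {0, 1}) (Pg d) = gam"
  proof
    fix a show "compose (Hcol d ` Mor (Hcat d 2)) (restrict gam {0, 1}) (Pg d) a = gam a"
    proof (cases "a \<in> Hcol d ` Mor (Hcat d 2)")
      case True
      hence a: "a \<le> d" unfolding Hcol_image by simp
      have "Pg d a = a mod 2" using a by (simp add: Pg_def)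
      thus ?thesis using True FF(3)[OF a] mod2_cases[of a] by (simp add: compose_def)
    next
      case False thus ?thesis using extensional_arb[OF ext(3) False] by (simp add: compose_def)
    qed
  qed
  show ?thesis unfolding mc_comp_def G0_def using 1 2 3 by simp
qed

lemma G0_unique:
  assumes d: "1 \<le> d" and G: "G \<in> mc_functors Z2grp id C id"
    and e: "mc_comp (Hcat d 2) (Hcol d) G (Po d, Pm d, Pg d) = (Fo, Fm, gam)"
  shows "G = G0 C gam"
proof -
  obtain Go Gm gg where Gd: "G = (Go, Gm, gg)" by (cases G) auto
  have GG: "mc_functor Z2grp id C id Go Gm gg" using G Gd by (simp add: mc_functors_def)
  have ext: "Go \<in> extensional {()}" "Gm \<in> extensional {0,1}" "gg \<in> extensional {0,1}"
    using GG unfolding mc_functor_def by auto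
  have e1: "compose (Obj (Hcat d 2)) Go (Po d) = Fo" and e2: "compose (Mor (Hcat d 2)) Gm (Pm d) = Fm"
    and e3: "compose (Hcol d ` Mor (Hcat d 2)) gg (Pg d) = gam"
    using e Gd by (simp_all add: mc_comp_def)
  let ?z = "\<lambda>i::nat. 0::nat"
  have z: "?z \<in> Obj (Hcat d 2)" using zv_Hvec by simp
  have Fz: "Fo ?z = Go ()" using fun_cong[OF e1, of ?z] z by (simp add: compose_def Po_def)
  have Gma: "Gm a = gam a" if a: "a \<in> {0,1}" for a
  proof -
    note s = seg01[OF a d]
    have "Fm (seg 0 a, ?z) = Gm a" using fun_cong[OF e2, of "(seg 0 a, ?z)"] s by (simp add: compose_def)
    moreover have "gam a = gg a"
    proof -
      have "a \<in> Hcol d ` Mor (Hcat d 2)" using s by (metis image_eqI)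
      moreover have "a \<le> d" using a d by auto
      ultimately show ?thesis using fun_cong[OF e3, of a] a by (auto simp: compose_def Pg_def)
    qed
    moreover have "gg a = Gm a" using GG a unfolding mc_functor_def by auto
    ultimately show ?thesis by simp
  qed
  have gga: "gg a = gam a" if a: "a \<in> {0,1}" for a
    using Gma[OF a] GG a unfolding mc_functor_def by auto
  have "Dom C (gam 0) = Go ()"
  proof -
    have "Fo ?z = Dom C (gam 0)"
    proof -
      have Fmc: "mc_functor (Hcat d 2) (Hcol d) C id Fo Fm gam"
      proof -
        have "mc_functor (Hcat d 2) (Hcol d) Z2grp id (Po d) (Pm d) (Pg d)" by (rule P_mc)
        from mc_functor_comp[OF this GG H_clos] show ?thesis using e1 e2 e3 by simp
      qed
      show ?thesis using F_facts(1)[OF Fmc d z] .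
    qed
    thus ?thesis using Fz by simp
  qed
  hence "Go = restrict (\<lambda>_. Dom C (gam 0)) {()}" using ext(1) by (auto simp: extensional_def)
  moreover have "Gm = restrict gam {0,1}"
  proof
    fix a show "Gm a = restrict gam {0,1} a" using Gma ext(2) by (cases "a \<in> {0,1}") (auto simp: extensional_def)
  qed
  moreover have "gg = restrict gam {0,1}"
  proof
    fix a show "gg a = restrict gam {0,1} a" using gga ext(3) by (cases "a \<in> {0,1}") (auto simp: extensional_def)
  qed
  ultimately show ?thesis using Gd by (simp add: G0_def)
qed


definition Phi :: "nat \<Rightarrow> (unit \<Rightarrow> 'o) \<times> (nat \<Rightarrow> 'm) \<times> (nat \<Rightarrow> 'm) \<Rightarrow> _" where
  "Phi d G = mc_comp (Hcat d 2) (Hcol d) G (Po d, Pm d, Pg d)"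

lemma Phi_bij:
  assumes d: "1 \<le> d"
  shows "bij_betw (Phi d) (mc_functors Z2grp id C id) (mc_functors (Hcat d 2) (Hcol d) C id)"
  unfolding bij_betw_def
proof (intro conjI)
  have into: "Phi d G \<in> mc_functors (Hcat d 2) (Hcol d) C id" if G: "G \<in> mc_functors Z2grp id C id" for G
  proof -
    obtain Go Gm gg where Gd: "G = (Go, Gm, gg)" by (cases G) auto
    have GG: "mc_functor Z2grp id C id Go Gm gg" using G Gd by (simp add: mc_functors_def)
    from mc_functor_comp[OF P_mc GG H_clos] show ?thesis
      unfolding Phi_def mc_comp_def Gd mc_functors_def by simp
  qed
  show "inj_on (Phi d) (mc_functors Z2grp id C id)"
  proof
    fix G1 G2 assume G1: "G1 \<in> mc_functors Z2grp id C id" and G2: "G2 \<in> mc_functors Z2grp id C id"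
      and eq: "Phi d G1 = Phi d G2"
    obtain Fo Fm gam where Fd: "Phi d G1 = (Fo, Fm, gam)" by (cases "Phi d G1") auto
    have "G1 = G0 C gam" using G0_unique[OF d G1] Fd unfolding Phi_def by simp
    moreover have "G2 = G0 C gam" using G0_unique[OF d G2] Fd eq unfolding Phi_def by simp
    ultimately show "G1 = G2" by simp
  qed
  show "Phi d ` mc_functors Z2grp id C id = mc_functors (Hcat d 2) (Hcol d) C id"
  proof
    show "Phi d ` mc_functors Z2grp id C id \<subseteq> mc_functors (Hcat d 2) (Hcol d) C id" using into by blast
    show "mc_functors (Hcat d 2) (Hcol d) C id \<subseteq> Phi d ` mc_functors Z2grp id C id"
    proof
      fix F assume F: "F \<in> mc_functors (Hcat d 2) (Hcol d) C id"
      obtain Fo Fm gam where Fd: "F = (Fo, Fm, gam)" by (cases F) auto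
      have FF: "mc_functor (Hcat d 2) (Hcol d) C id Fo Fm gam" using F Fd by (simp add: mc_functors_def)
      have "Phi d (G0 C gam) = F" using G0_comp[OF FF d] Fd unfolding Phi_def by simp
      thus "F \<in> Phi d ` mc_functors Z2grp id C id" using G0_mc[OF FF d] by (metis image_eqI)
    qed
  qed
qed


theorem proposition4p3:
  fixes d :: nat
  assumes "d \<ge> 1"
  shows
    "(\<exists>(\<Phi>o :: nat set \<Rightarrow> unit) (\<Phi>m :: nat set \<Rightarrow> nat).
        cat_iso (Ucat (Hcat d 2) (Hcol d)) Z2grp \<Phi>o \<Phi>m \<and>
        (\<forall>x\<in>Obj (Hcat d 2). \<Phi>o (lambar_obj (Hcat d 2) (Hcol d) x) = ()) \<and>
        (\<forall>g x. (g, x) \<in> Mor (Hcat d 2) \<longrightarrow>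
            \<Phi>m (lambar_mor (Hcat d 2) (Hcol d) (g, x)) = (\<Sum>i<d. g i) mod 2) \<and>
        (\<forall>a\<in>{0..d}. \<Phi>m (s1 (Hcat d 2) (Hcol d) a) = a mod 2))
     \<and> mc_functor (Hcat d 2) (Hcol d) Z2grp id
         (restrict (\<lambda>x. ()) (Obj (Hcat d 2)))
         (restrict (\<lambda>(g, x). (\<Sum>i<d. g i) mod 2) (Mor (Hcat d 2)))
         (restrict (\<lambda>a. a mod 2) {0..d})
     \<and> (\<forall>C :: ('o, 'm) cat. category C \<longrightarrow>
          (\<forall>F \<in> mc_functors (Hcat d 2) (Hcol d) C id.
             (\<exists>!G. G \<in> mc_functors Z2grp id C id \<and>
                mc_comp (Hcat d 2) (Hcol d) G
                  (restrict (\<lambda>x. ()) (Obj (Hcat d 2)),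
                   restrict (\<lambda>(g, x). (\<Sum>i<d. g i) mod 2) (Mor (Hcat d 2)),
                   restrict (\<lambda>a. a mod 2) {0..d}) = F)))
     \<and> (\<forall>(C :: ('o, 'm) cat) d'. category C \<longrightarrow> d' \<ge> 1 \<longrightarrow>
          (\<exists>h. bij_betw h (mc_functors (Hcat d 2) (Hcol d) C id)
                         (mc_functors (Hcat d' 2) (Hcol d') C id)))"
proof (intro conjI)
  have d: "1 \<le> d" using assms .
  let ?U = "Ucat (Hcat d 2) (Hcol d)"
  show "\<exists>(\<Phi>o :: nat set \<Rightarrow> unit) (\<Phi>m :: nat set \<Rightarrow> nat).
        cat_iso ?U Z2grp \<Phi>o \<Phi>m \<and>
        (\<forall>x\<in>Obj (Hcat d 2). \<Phi>o (lambar_obj (Hcat d 2) (Hcol d) x) = ()) \<and>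
        (\<forall>g x. (g, x) \<in> Mor (Hcat d 2) \<longrightarrow>
            \<Phi>m (lambar_mor (Hcat d 2) (Hcol d) (g, x)) = (\<Sum>i<d. g i) mod 2) \<and>
        (\<forall>a\<in>{0..d}. \<Phi>m (s1 (Hcat d 2) (Hcol d) a) = a mod 2)"
  proof (intro exI conjI)
    have P0: "Phim (cls d 0) = 0" and P1: "Phim (cls d 1) = 1" using Phim_cls[OF d, of 0] Phim_cls[OF d, of 1] by simp_all
    have c: "\<forall>g\<in>Mor ?U. \<forall>f\<in>Mor ?U. Phim (Comp ?U g f) = (Phim g + Phim f) mod 2"
      using U_Comp[OF d] by blast
    have m: "\<forall>f. Phim f \<in> {0,1}" by (simp add: Phim_def)
    have isf: "is_functor ?U Z2grp (\<lambda>_. ()) Phim"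
      unfolding is_functor_def using c P0 m by (simp add: U_Ide)
    have b1: "bij_betw (\<lambda>_. ()) (Obj ?U) (Obj Z2grp)"
      unfolding U_Obj by (simp add: bij_betw_def)
    have b2: "bij_betw Phim (Mor ?U) (Mor Z2grp)"
      unfolding U_Mor2[OF d] bij_betw_def using P0 P1 cls_neq[of d] by (auto simp: inj_on_def)
    show "cat_iso ?U Z2grp (\<lambda>_. ()) Phim" unfolding cat_iso_def using isf b1 b2 by blast
    show "\<forall>x\<in>Obj (Hcat d 2). (\<lambda>_. ()) (lambar_obj (Hcat d 2) (Hcol d) x) = ()" by simp
    show "\<forall>g x. (g, x) \<in> Mor (Hcat d 2) \<longrightarrow>
            Phim (lambar_mor (Hcat d 2) (Hcol d) (g, x)) = (\<Sum>i<d. g i) mod 2"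
    proof (intro allI impI)
      fix g x assume gx: "(g, x) \<in> Mor (Hcat d 2)"
      have "Phim (lambar_mor (Hcat d 2) (Hcol d) (g, x)) = hweight d g mod 2"
        unfolding lambar_mor_def Hcol_simp s1_eq[OF hweight_le] Phim_cls[OF d] ..
      also have "\<dots> = (\<Sum>i<d. g i) mod 2" using hweight_sum[of g d] gx by simp
      finally show "Phim (lambar_mor (Hcat d 2) (Hcol d) (g, x)) = (\<Sum>i<d. g i) mod 2" .
    qed
    show "\<forall>a\<in>{0..d}. Phim (s1 (Hcat d 2) (Hcol d) a) = a mod 2"
      using s1_eq Phim_cls[OF d] by simp
  qed
  show "mc_functor (Hcat d 2) (Hcol d) Z2grp id
         (restrict (\<lambda>x. ()) (Obj (Hcat d 2)))
         (restrict (\<lambda>(g, x). (\<Sum>i<d. g i) mod 2) (Mor (Hcat d 2)))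
         (restrict (\<lambda>a. a mod 2) {0..d})"
    using P_mc[of d] unfolding Po_def Pm_def Pg_def .
  show "\<forall>C :: ('o, 'm) cat. category C \<longrightarrow>
          (\<forall>F \<in> mc_functors (Hcat d 2) (Hcol d) C id.
             (\<exists>!G. G \<in> mc_functors Z2grp id C id \<and>
                mc_comp (Hcat d 2) (Hcol d) G
                  (restrict (\<lambda>x. ()) (Obj (Hcat d 2)),
                   restrict (\<lambda>(g, x). (\<Sum>i<d. g i) mod 2) (Mor (Hcat d 2)),
                   restrict (\<lambda>a. a mod 2) {0..d}) = F))"
  proof (intro allI impI ballI)
    fix C :: "('o, 'm) cat" and F assume F: "F \<in> mc_functors (Hcat d 2) (Hcol d) C id"
    obtain Fo Fm gam where Fd: "F = (Fo, Fm, gam)" by (cases F) auto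
    have FF: "mc_functor (Hcat d 2) (Hcol d) C id Fo Fm gam" using F Fd by (simp add: mc_functors_def)
    show "\<exists>!G. G \<in> mc_functors Z2grp id C id \<and>
                mc_comp (Hcat d 2) (Hcol d) G
                  (restrict (\<lambda>x. ()) (Obj (Hcat d 2)),
                   restrict (\<lambda>(g, x). (\<Sum>i<d. g i) mod 2) (Mor (Hcat d 2)),
                   restrict (\<lambda>a. a mod 2) {0..d}) = F"
      unfolding Po_def[symmetric] Pm_def[symmetric] Pg_def[symmetric]
    proof (rule ex1I[of _ "G0 C gam"])
      show "G0 C gam \<in> mc_functors Z2grp id C id \<and>
          mc_comp (Hcat d 2) (Hcol d) (G0 C gam) (Po d, Pm d, Pg d) = F"
        using G0_mc[OF FF d] G0_comp[OF FF d] Fd by simp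
      fix G assume "G \<in> mc_functors Z2grp id C id \<and> mc_comp (Hcat d 2) (Hcol d) G (Po d, Pm d, Pg d) = F"
      thus "G = G0 C gam" using G0_unique[OF d] Fd by blast
    qed
  qed
  show "\<forall>(C :: ('o, 'm) cat) d'. category C \<longrightarrow> d' \<ge> 1 \<longrightarrow>
          (\<exists>h. bij_betw h (mc_functors (Hcat d 2) (Hcol d) C id)
                         (mc_functors (Hcat d' 2) (Hcol d') C id))"
  proof (intro allI impI)
    fix C :: "('o, 'm) cat" and d' :: nat assume d': "1 \<le> d'"
    have b: "bij_betw (Phi d) (mc_functors Z2grp id C id) (mc_functors (Hcat d 2) (Hcol d) C id)"
      by (rule Phi_bij[OF d])
    have b': "bij_betw (Phi d') (mc_functors Z2grp id C id) (mc_functors (Hcat d' 2) (Hcol d') C id)"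
      by (rule Phi_bij[OF d'])
    show "\<exists>h. bij_betw h (mc_functors (Hcat d 2) (Hcol d) C id) (mc_functors (Hcat d' 2) (Hcol d') C id)"
      using bij_betw_trans[OF bij_betw_inv_into[OF b] b'] by blast
  qed
qed

end
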